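(* Let $R$ be a radically finite ring and let $P$ be a prime ideal of $R$. If $P$ has finite height, then $P$ is finitely generated.
   Context: All rings are commutative with identity. An ideal $I$ of $R$ is called radically perfect if $\mathrm{ht}(I)=\inf\{n \mid \sqrt{I}=\sqrt{(\theta_1,\dots,\theta_n)} \text{ for some } \theta_1,\dots,\theta_n\in R\}$, and moreover, if $\mathrm{ht}(I)=0$, then $\sqrt{I}=\sqrt{(\theta)}$ for some zero divisor $\theta$ of $R$. A ring $R$ is called radically finite if every prime ideal $P$ of $R$ is radically perfect and, in addition, the set of ideals of $R$ that are generated by $\mathrm{ht}(P)$ elements and have radical $P$ has a maximal member $A$ such that there are only finitely many ideals in any chain of ideals between $A$ and $P$. *)

theory Defs
  imports "HOL-Algebra.Ideal" "HOL-Library.Extended_Nat"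
begin

definition rad :: "('a, 'b) ring_scheme \<Rightarrow> 'a set \<Rightarrow> 'a set" where
  "rad R I = {x \<in> carrier R. \<exists>n::nat. x [^]\<^bsub>R\<^esub> n \<in> I}"

definition prime_height :: "('a, 'b) ring_scheme \<Rightarrow> 'a set \<Rightarrow> enat" where
  "prime_height R Q = Sup {enat n | n. \<exists>c :: nat \<Rightarrow> 'a set.
      (\<forall>i\<le>n. primeideal (c i) R) \<and> (\<forall>i<n. c i \<subset> c (Suc i)) \<and> c n = Q}"

definition ideal_height :: "('a, 'b) ring_scheme \<Rightarrow> 'a set \<Rightarrow> enat" where
  "ideal_height R I = Inf {prime_height R Q | Q. primeideal Q R \<and> I \<subseteq> Q}"

definition zero_divisor :: "('a, 'b) ring_scheme \<Rightarrow> 'a \<Rightarrow> bool" where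
  "zero_divisor R t \<longleftrightarrow> t \<in> carrier R \<and>
     (\<exists>x\<in>carrier R. x \<noteq> \<zero>\<^bsub>R\<^esub> \<and> t \<otimes>\<^bsub>R\<^esub> x = \<zero>\<^bsub>R\<^esub>)"

definition radically_perfect :: "('a, 'b) ring_scheme \<Rightarrow> 'a set \<Rightarrow> bool" where
  "radically_perfect R I \<longleftrightarrow>
     ideal_height R I = Inf {enat n | n. \<exists>\<theta> :: nat \<Rightarrow> 'a.
          (\<forall>i<n. \<theta> i \<in> carrier R) \<and> rad R I = rad R (Idl\<^bsub>R\<^esub> (\<theta> ` {..<n}))} \<and>
     (ideal_height R I = 0 \<longrightarrow>
        (\<exists>\<theta>. zero_divisor R \<theta> \<and> rad R I = rad R (Idl\<^bsub>R\<^esub> {\<theta>})))"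

(* A is generated by ht(P) elements (theta_i, i < ht(P); countably many if ht(P) = \<infinity>) *)
definition generated_by_n :: "('a, 'b) ring_scheme \<Rightarrow> enat \<Rightarrow> 'a set \<Rightarrow> bool" where
  "generated_by_n R n A \<longleftrightarrow> (\<exists>\<theta> :: nat \<Rightarrow> 'a.
      (\<forall>i. enat i < n \<longrightarrow> \<theta> i \<in> carrier R) \<and> A = Idl\<^bsub>R\<^esub> (\<theta> ` {i. enat i < n}))"

definition radically_finite :: "('a, 'b) ring_scheme \<Rightarrow> bool" where
  "radically_finite R \<longleftrightarrow> (\<forall>P. primeideal P R \<longrightarrow>
     radically_perfect R P \<and>
     (let S = {A. ideal A R \<and> generated_by_n R (prime_height R P) A \<and> rad R A = P} in
      \<exists>A\<in>S. (\<forall>B\<in>S. A \<subseteq> B \<longrightarrow> B = A) \<and>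
        (\<forall>C. (\<forall>J\<in>C. ideal J R \<and> A \<subseteq> J \<and> J \<subseteq> P) \<and>
             (\<forall>J\<in>C. \<forall>K\<in>C. J \<subseteq> K \<or> K \<subseteq> J) \<longrightarrow> finite C)))"

end

theory Submission
  imports Defs
begin

lemma Idl_mono_aux: "S \<subseteq> T \<Longrightarrow> Idl\<^bsub>R\<^esub> S \<subseteq> Idl\<^bsub>R\<^esub> T"
  unfolding genideal_def by blast

theorem theorem2p1:
  fixes R (structure) and P :: "'a set"
  assumes "cring R"
    and "radically_finite R"
    and "primeideal P R"
    and "prime_height R P \<noteq> \<infinity>"
  shows "\<exists>S. finite S \<and> S \<subseteq> carrier R \<and> P = Idl S"
proof (rule ccontr)
  assume H: "\<not> (\<exists>S. finite S \<and> S \<subseteq> carrier R \<and> P = Idl S)"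
  interpret cring R by (rule assms(1))
  interpret P: primeideal P R by (rule assms(3))
  have Pc: "P \<subseteq> carrier R" by (rule P.a_subset)
  have Pid: "ideal P R" by (rule P.is_ideal)
  obtain m where m: "prime_height R P = enat m" using assms(4) by (cases "prime_height R P") auto
  define Sx where "Sx = {A. ideal A R \<and> generated_by_n R (prime_height R P) A \<and> rad R A = P}"
  have "let S = {A. ideal A R \<and> generated_by_n R (prime_height R P) A \<and> rad R A = P} in
      \<exists>A\<in>S. (\<forall>B\<in>S. A \<subseteq> B \<longrightarrow> B = A) \<and>
        (\<forall>C. (\<forall>J\<in>C. ideal J R \<and> A \<subseteq> J \<and> J \<subseteq> P) \<and>
             (\<forall>J\<in>C. \<forall>K\<in>C. J \<subseteq> K \<or> K \<subseteq> J) \<longrightarrow> finite C)"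
    using assms(2)[unfolded radically_finite_def, rule_format, OF assms(3)] by (rule conjunct2)
  then have "\<exists>A\<in>Sx. (\<forall>C. (\<forall>J\<in>C. ideal J R \<and> A \<subseteq> J \<and> J \<subseteq> P) \<and>
             (\<forall>J\<in>C. \<forall>K\<in>C. J \<subseteq> K \<or> K \<subseteq> J) \<longrightarrow> finite C)"
    unfolding Let_def Sx_def[symmetric] by blast
  then obtain A where AS: "A \<in> Sx" and ch: "\<And>C. (\<forall>J\<in>C. ideal J R \<and> A \<subseteq> J \<and> J \<subseteq> P) \<and>
             (\<forall>J\<in>C. \<forall>K\<in>C. J \<subseteq> K \<or> K \<subseteq> J) \<Longrightarrow> finite C"
    by blast
  from AS have Aid: "ideal A R" and gen: "generated_by_n R (enat m) A" and radA: "rad R A = P"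
    unfolding Sx_def m by auto
  have AP: "A \<subseteq> P"
  proof
    fix x assume x: "x \<in> A"
    have xc: "x \<in> carrier R" using x ideal.Icarr[OF Aid] by blast
    have "x [^] (1::nat) \<in> A" using x xc by simp
    then have "x \<in> rad R A" unfolding rad_def using xc by blast
    then show "x \<in> P" using radA by simp
  qed
  obtain \<theta> where thc: "\<And>i. enat i < enat m \<Longrightarrow> \<theta> i \<in> carrier R"
    and Aeq: "A = Idl (\<theta> ` {i. enat i < enat m})"
    using gen unfolding generated_by_n_def by blast
  define S0 where "S0 = \<theta> ` {i. enat i < enat m}"
  have S0c: "S0 \<subseteq> carrier R" using thc unfolding S0_def by blast
  have S0f: "finite S0" unfolding S0_def by simp
  have S0P: "S0 \<subseteq> P" using genideal_self[OF S0c] AP Aeq unfolding S0_def by blast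
  define S where "S = rec_nat S0 (\<lambda>_ T. insert (SOME x. x \<in> P - Idl T) T)"
  have S_0: "S 0 = S0" unfolding S_def by simp
  have S_Suc: "S (Suc k) = insert (SOME x. x \<in> P - Idl (S k)) (S k)" for k
    unfolding S_def by simp
  have ex: "\<exists>x. x \<in> P - Idl T" if "finite T" "T \<subseteq> P" for T
  proof -
    have "Idl T \<subseteq> P" using genideal_minimal[OF Pid that(2)] .
    moreover have "P \<noteq> Idl T" using H that Pc by blast
    ultimately show ?thesis by blast
  qed
  have inv: "finite (S k) \<and> S k \<subseteq> P" for k
  proof (induction k)
    case 0 then show ?case using S_0 S0f S0P by simp
  next
    case (Suc k)
    then have "(SOME x. x \<in> P - Idl (S k)) \<in> P - Idl (S k)"
      using ex by (meson someI_ex)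
    then show ?case using Suc S_Suc by simp
  qed
  have strict: "Idl (S k) \<subset> Idl (S (Suc k))" for k
  proof -
    have s: "(SOME x. x \<in> P - Idl (S k)) \<in> P - Idl (S k)"
      using ex inv by (meson someI_ex)
    have "S (Suc k) \<subseteq> carrier R" using inv Pc by blast
    then have "S (Suc k) \<subseteq> Idl (S (Suc k))" by (rule genideal_self)
    then have "(SOME x. x \<in> P - Idl (S k)) \<in> Idl (S (Suc k))" using S_Suc by blast
    moreover have "Idl (S k) \<subseteq> Idl (S (Suc k))" by (rule Idl_mono_aux) (auto simp: S_Suc)
    ultimately show ?thesis using s by blast
  qed
  have smono: "strict_mono (\<lambda>k. Idl (S k))"
    unfolding strict_mono_Suc_iff using strict by blast
  have mono': "mono (\<lambda>k. Idl (S k))" using smono strict_mono_mono by blast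
  define C where "C = range (\<lambda>k. Idl (S k))"
  have "finite C"
  proof (rule ch, intro conjI ballI)
    fix J assume "J \<in> C"
    then obtain k where J: "J = Idl (S k)" unfolding C_def by blast
    show "ideal J R" using J genideal_ideal inv Pc by (meson order_trans)
    have "S0 \<subseteq> S k" by (induction k) (auto simp: S_0 S_Suc)
    then show "A \<subseteq> J" unfolding J Aeq S0_def[symmetric] by (rule Idl_mono_aux)
    show "J \<subseteq> P" using J genideal_minimal[OF Pid] inv by blast
  next
    fix J K assume "J \<in> C" "K \<in> C"
    then obtain j k where "J = Idl (S j)" "K = Idl (S k)" unfolding C_def by blast
    then show "J \<subseteq> K \<or> K \<subseteq> J" using mono' nat_le_linear unfolding mono_def by metis
  qed
  moreover have "infinite C" unfolding C_def
    using smono strict_mono_imp_inj_on range_inj_infinite by blast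
  ultimately show False by simp
qed

end
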